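(* Let $x_1,\dots,x_n$ be fixed data, $1\le k\le n$, and $s$ a real-valued permutation-symmetric function of $k$ arguments. Let $(I_1,\dots,I_k)$ be uniformly distributed over all $k$-tuples of distinct indices in $\{1,\dots,n\}$ (subsampling without replacement), $X_i^*=x_{I_i}$, $s^*=s(X_1^*,\dots,X_k^* )$, and $w_j^*=\mathbf{1}\{j\in\{I_1,\dots,I_k\}\}$. With $\mathbb{E}_*,\mathrm{Cov}_*$ denoting expectation and covariance over this subsampling, let $e_j=\mathbb{E}_*[s^*\mid I_1=j]$ and $s_0=\mathbb{E}_*[s^*]$. Then for every $j$, $$\mathrm{Cov}_*(s^*,w_j^* )=\frac{k}{n}(e_j-s_0),$$ and consequently $$\sum_{j=1}^n\mathrm{Cov}_*^2(s^*,w_j^* )=\left(\frac{k}{n}\right)^2\sum_{j=1}^n(e_j-s_0)^2 .$$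
   Context: Equivalently $e_j=\binom{n-1}{k-1}^{-1}\sum_{S\ni j}s(x_S)$ and $s_0=\binom{n}{k}^{-1}\sum_S s(x_S)$, sums over $k$-subsets $S\subseteq\{1,\dots,n\}$. The quantity $\sum_j\mathrm{Cov}_*^2(s^*,w_j^* )$ is called the pseudo infinitesimal jackknife $\mathrm{ps}\text{-}\mathrm{IJ}_\mathrm{U}$. *)

theory Defs
  imports "HOL-Probability.Probability"
begin

definition pmf_cov :: "'b pmf \<Rightarrow> ('b \<Rightarrow> real) \<Rightarrow> ('b \<Rightarrow> real) \<Rightarrow> real" where
  "pmf_cov P f g =
     measure_pmf.expectation P (\<lambda>w. (f w - measure_pmf.expectation P f) *
                                     (g w - measure_pmf.expectation P g))"

definition dist_tuples :: "nat \<Rightarrow> nat \<Rightarrow> nat list set" where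
  "dist_tuples n k = {ts. length ts = k \<and> distinct ts \<and> set ts \<subseteq> {1..n}}"

definition subsample :: "nat \<Rightarrow> nat \<Rightarrow> nat list pmf" where
  "subsample n k = pmf_of_set (dist_tuples n k)"

definition perm_symmetric :: "nat \<Rightarrow> ('a list \<Rightarrow> real) \<Rightarrow> bool" where
  "perm_symmetric k s \<longleftrightarrow>
     (\<forall>xs ys. length xs = k \<longrightarrow> mset ys = mset xs \<longrightarrow> s ys = s xs)"

end

theory Submission
  imports Defs
begin

lemma cond_pmf_of_set_eq:
  assumes "finite T" "T \<inter> A \<noteq> {}"
  shows "cond_pmf (pmf_of_set T) A = pmf_of_set (T \<inter> A)"
proof -
  have T: "T \<noteq> {}" using assms by auto
  have ne: "set_pmf (pmf_of_set T) \<inter> A \<noteq> {}" using assms T by simp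
  have cT: "card T > 0" using assms T by (simp add: card_gt_0_iff)
  have cTA: "card (T \<inter> A) > 0" using assms by (simp add: card_gt_0_iff)
  show ?thesis
  proof (rule pmf_eqI)
    fix y
    show "pmf (cond_pmf (pmf_of_set T) A) y = pmf (pmf_of_set (T \<inter> A)) y"
      using cT cTA assms T
      by (simp add: pmf_cond[OF ne] measure_pmf_of_set indicator_def)
  qed
qed

definition sw :: "nat \<Rightarrow> 'b list \<Rightarrow> 'b list" where
  "sw i ts = ts[0 := ts ! i, i := ts ! 0]"

lemma sw_length[simp]: "length (sw i ts) = length ts"
  unfolding sw_def by simp

lemma sw_nth: "i < length ts \<Longrightarrow> m < length ts \<Longrightarrow>
   sw i ts ! m = (if m = i then ts ! 0 else if m = 0 then ts ! i else ts ! m)"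
  unfolding sw_def by (auto simp: nth_list_update)

lemma sw_invol: "i < length ts \<Longrightarrow> sw i (sw i ts) = ts"
proof -
  assume a: "i < length ts"
  then have "0 < length ts" by linarith
  with a show ?thesis by (intro nth_equalityI) (auto simp: sw_nth)
qed

lemma sw_mset: "i < length ts \<Longrightarrow> mset (sw i ts) = mset ts"
proof -
  assume a: "i < length ts"
  then have "0 < length ts" by linarith
  with a show ?thesis unfolding sw_def using mset_swap[of i ts 0] by simp
qed

lemma sw_map: "i < length ts \<Longrightarrow> map f (sw i ts) = sw i (map f ts)"
proof -
  assume a: "i < length ts"
  hence "0 < length ts" by linarith
  with a show ?thesis by (intro nth_equalityI) (auto simp: sw_nth nth_map[of 0])
qed

lemma sw_nth0: "i < length ts \<Longrightarrow> sw i ts ! 0 = ts ! i"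
proof -
  assume a: "i < length ts"
  then have "0 < length ts" by linarith
  with a show ?thesis using sw_nth[of i ts 0] by simp
qed

lemma sw_in: "i < length ts \<Longrightarrow> ts \<in> dist_tuples n k \<Longrightarrow> sw i ts \<in> dist_tuples n k"
proof -
  assume i: "i < length ts" and ts: "ts \<in> dist_tuples n k"
  have m: "mset (sw i ts) = mset ts" using i by (rule sw_mset)
  have "distinct ts" using ts by (simp add: dist_tuples_def)
  then have "distinct (sw i ts)" using mset_eq_imp_distinct_iff[OF m] by blast
  moreover have "set (sw i ts) = set ts" using m by (rule mset_eq_setD)
  ultimately show ?thesis using ts by (simp add: dist_tuples_def)
qed

lemma key_sum:
  fixes G :: "nat list \<Rightarrow> real"
  assumes k: "1 \<le> k" and finT: "finite (dist_tuples n k)"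
    and Gs: "\<And>ts i. ts \<in> dist_tuples n k \<Longrightarrow> i < k \<Longrightarrow> G (sw i ts) = G ts"
  shows "(\<Sum>ts\<in>dist_tuples n k. G ts * (if j \<in> set ts then 1 else 0))
         = real k * sum G {ts\<in>dist_tuples n k. hd ts = j}"
proof -
  define T where "T = dist_tuples n k"
  have step1: "G ts * (if j \<in> set ts then 1 else 0) = (\<Sum>i<k. if ts ! i = j then G ts else 0)"
    if "ts \<in> T" for ts
  proof (cases "j \<in> set ts")
    case True
    then obtain i0 where i0: "i0 < length ts" "ts ! i0 = j" by (auto simp: in_set_conv_nth)
    have "(\<Sum>i<k. if ts ! i = j then G ts else 0) = (\<Sum>i<k. if i = i0 then G ts else 0)"
      using that i0 by (intro sum.cong) (auto simp: T_def dist_tuples_def nth_eq_iff_index_eq)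
    also have "... = G ts" using i0 that by (simp add: T_def dist_tuples_def)
    finally show ?thesis using True by simp
  next
    case False
    then show ?thesis using that by (auto simp: T_def dist_tuples_def intro!: sum.neutral)
  qed
  have "(\<Sum>ts\<in>T. G ts * (if j \<in> set ts then 1 else 0))
        = (\<Sum>ts\<in>T. \<Sum>i<k. if ts ! i = j then G ts else 0)"
    by (rule sum.cong) (simp_all add: step1)
  also have "... = (\<Sum>i<k. \<Sum>ts\<in>T. if ts ! i = j then G ts else 0)" by (rule sum.swap)
  also have "... = (\<Sum>i<k. sum G {ts\<in>T. hd ts = j})"
  proof (rule sum.cong[OF refl])
    fix i assume i: "i \<in> {..<k}"
    have "(\<Sum>ts\<in>T. if ts ! i = j then G ts else 0) = sum G {ts\<in>T. ts ! i = j}"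
      using finT by (simp add: sum.inter_filter T_def)
    also have "... = sum G {ts\<in>T. hd ts = j}"
    proof (rule sum.reindex_bij_witness[of _ "sw i" "sw i"])
      fix a assume a: "a \<in> {ts\<in>T. ts ! i = j}"
      then have len: "length a = k" by (simp add: T_def dist_tuples_def)
      with i have il: "i < length a" by simp
      show "sw i (sw i a) = a" using il by (rule sw_invol)
      have "a \<noteq> []" using il by (cases a) auto
      then have "sw i a \<noteq> []" by (metis sw_length length_0_conv)
      then show "sw i a \<in> {ts\<in>T. hd ts = j}"
        using a il by (auto simp: T_def sw_in sw_nth0 hd_conv_nth)
      show "G (sw i a) = G a" using a i Gs by (simp add: T_def)
    next
      fix b assume b: "b \<in> {ts\<in>T. hd ts = j}"
      then have len: "length b = k" by (simp add: T_def dist_tuples_def)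
      with i have il: "i < length b" by simp
      show "sw i (sw i b) = b" using il by (rule sw_invol)
      have "b \<noteq> []" using il by (cases b) auto
      then show "sw i b \<in> {ts\<in>T. ts ! i = j}"
        using b il k len by (auto simp: T_def sw_in sw_nth hd_conv_nth[symmetric])
    qed
    finally show "(\<Sum>ts\<in>T. if ts ! i = j then G ts else 0) = sum G {ts\<in>T. hd ts = j}" .
  qed
  also have "... = real k * sum G {ts\<in>T. hd ts = j}" by simp
  finally show ?thesis by (simp add: T_def)
qed

lemma prod_split_top:
  assumes "1 \<le> k" "k \<le> (n::nat)"
  shows "\<Prod>{n - k + 1..n} = n * \<Prod>{n - k + 1..n - 1}"
proof -
  have "{n - k + 1..n} = insert n {n - k + 1..n - 1}" using assms by auto
  moreover have "n \<notin> {n - k + 1..n - 1}" using assms by auto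
  ultimately show ?thesis by simp
qed

theorem proposition1:
  fixes x :: "nat \<Rightarrow> 'a" and s :: "'a list \<Rightarrow> real" and n k :: nat
  assumes "1 \<le> k" and "k \<le> n"
    and "perm_symmetric k s"
  shows "(\<forall>j\<in>{1..n}.
            pmf_cov (subsample n k) (\<lambda>ts. s (map x ts)) (\<lambda>ts. if j \<in> set ts then 1 else 0)
            = (real k / real n) *
              (measure_pmf.expectation (cond_pmf (subsample n k) {ts. hd ts = j}) (\<lambda>ts. s (map x ts))
               - measure_pmf.expectation (subsample n k) (\<lambda>ts. s (map x ts))))
       \<and> (\<Sum>j=1..n. (pmf_cov (subsample n k) (\<lambda>ts. s (map x ts))
                        (\<lambda>ts. if j \<in> set ts then 1 else 0))\<^sup>2)
         = (real k / real n)\<^sup>2 *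
           (\<Sum>j=1..n. (measure_pmf.expectation (cond_pmf (subsample n k) {ts. hd ts = j}) (\<lambda>ts. s (map x ts))
                        - measure_pmf.expectation (subsample n k) (\<lambda>ts. s (map x ts)))\<^sup>2)"
proof -
  define T where "T = dist_tuples n k"
  define F where "F = (\<lambda>ts. s (map x ts))"
  define H where "H j = {ts\<in>T. hd ts = j}" for j
  have sub: "subsample n k = pmf_of_set T" by (simp add: subsample_def T_def)
  have Tcard: "card T = \<Prod>{n - k + 1..n}"
    using card_lists_distinct_length_eq[of "{1..n}" k] assms unfolding T_def dist_tuples_def by simp
  have Tpos: "card T > 0" unfolding Tcard by (auto intro!: prod_pos)
  hence finT: "finite T" and neT: "T \<noteq> {}" by (auto simp: card_gt_0_iff)
  have Hcard: "card (H j) = \<Prod>{n - k + 1..n - 1}" if j: "j \<in> {1..n}" for j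
  proof -
    define U where "U = {us. length us = k - 1 \<and> distinct us \<and> set us \<subseteq> {1..n} - {j}}"
    have "H j = Cons j ` U"
    proof (intro set_eqI iffI)
      fix ts assume "ts \<in> H j"
      then have ts: "length ts = k" "distinct ts" "set ts \<subseteq> {1..n}" "hd ts = j"
        by (auto simp: H_def T_def dist_tuples_def)
      then obtain us where "ts = j # us" using assms(1) by (cases ts) auto
      then show "ts \<in> Cons j ` U" using ts by (auto simp: U_def)
    next
      fix ts assume "ts \<in> Cons j ` U"
      then show "ts \<in> H j" using j assms(1) by (auto simp: U_def H_def T_def dist_tuples_def)
    qed
    then have "card (H j) = card U" by (simp add: card_image)
    also have "card U = \<Prod>{card ({1..n} - {j}) - (k - 1) + 1..card ({1..n} - {j})}"
      unfolding U_def using j assms by (intro card_lists_distinct_length_eq) auto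
    also have "card ({1..n} - {j}) = n - 1" using j by simp
    also have "n - 1 - (k - 1) + 1 = n - k + 1" using assms by simp
    finally show ?thesis .
  qed
  have TH: "real (card T) = real n * real (card (H j))" if "j \<in> {1..n}" for j
    using Hcard[OF that] Tcard prod_split_top[OF assms(1,2)] by (metis of_nat_mult)
  have Hne: "H j \<noteq> {}" if "j \<in> {1..n}" for j
  proof -
    have "card (H j) \<noteq> 0"
    proof
      assume "card (H j) = 0"
      then have "real (card T) = 0" using TH[OF that] by simp
      then show False using Tpos by simp
    qed
    then show ?thesis by auto
  qed
  have finH: "finite (H j)" for j using finT by (simp add: H_def)
  have Fsym: "F (sw i ts) = F ts" if "ts \<in> T" "i < k" for ts i
  proof -
    have len: "length ts = k" using that by (simp add: T_def dist_tuples_def)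
    then have "F (sw i ts) = s (sw i (map x ts))" using that by (simp add: F_def sw_map)
    also have "... = s (map x ts)"
      using assms(3) len that sw_mset[of i "map x ts"] unfolding perm_symmetric_def by simp
    finally show ?thesis by (simp add: F_def)
  qed
  have keyF: "(\<Sum>ts\<in>T. F ts * (if j \<in> set ts then 1 else 0)) = real k * sum F (H j)" for j
    using key_sum[of k n F j] assms(1) finT Fsym by (simp add: T_def H_def)
  have keyW: "(\<Sum>ts\<in>T. (if j \<in> set ts then 1 else 0)) = real k * real (card (H j))" for j
    using key_sum[of k n "\<lambda>_. 1" j] assms(1) finT by (simp add: T_def H_def)
  have cond: "cond_pmf (subsample n k) {ts. hd ts = j} = pmf_of_set (H j)" if "j \<in> {1..n}" for j
  proof -
    have "T \<inter> {ts. hd ts = j} = H j" by (auto simp: H_def)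
    then show ?thesis using cond_pmf_of_set_eq[of T "{ts. hd ts = j}"] finT Hne[OF that]
      by (simp add: sub)
  qed
  define a where "a = sum F T / card T"
  have first: "pmf_cov (subsample n k) F (\<lambda>ts. if j \<in> set ts then 1 else 0)
            = (real k / real n) *
              (measure_pmf.expectation (cond_pmf (subsample n k) {ts. hd ts = j}) F
               - measure_pmf.expectation (subsample n k) F)" if j: "j \<in> {1..n}" for j
  proof -
    define W where "W = (\<lambda>ts::nat list. if j \<in> set ts then 1 else (0::real))"
    define b where "b = sum W T / card T"
    define S where "S = sum F (H j)"
    define c where "c = real (card (H j))"
    have N: "real (card T) = real n * c" using TH[OF j] by (simp add: c_def)
    have cpos: "c > 0" using Hne[OF j] finH by (simp add: c_def card_gt_0_iff)
    have npos: "real n > 0" using assms by simp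
    have EF: "measure_pmf.expectation (subsample n k) F = a"
      using finT neT by (simp add: sub a_def integral_pmf_of_set)
    have EW: "measure_pmf.expectation (subsample n k) W = b"
      using finT neT by (simp add: sub b_def integral_pmf_of_set)
    have EH: "measure_pmf.expectation (cond_pmf (subsample n k) {ts. hd ts = j}) F = S / c"
      using finH Hne[OF j] by (simp add: cond[OF j] integral_pmf_of_set S_def c_def)
    have sW: "sum W T = real k * c" using keyW[of j] by (simp add: W_def c_def)
    have sFW: "(\<Sum>ts\<in>T. F ts * W ts) = real k * S" using keyF[of j] by (simp add: W_def S_def)
    have sF: "sum F T = a * card T" using Tpos by (simp add: a_def)
    have "(\<Sum>ts\<in>T. (F ts - a) * (W ts - b))
          = (\<Sum>ts\<in>T. F ts * W ts) - b * sum F T - a * sum W T + real (card T) * a * b"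
      by (simp add: algebra_simps sum.distrib sum_subtractf sum_distrib_left)
    also have "... = real k * S - a * (real k * c)"
      using sW sFW sF Tpos by (simp add: b_def)
    finally have cov: "(\<Sum>ts\<in>T. (F ts - a) * (W ts - b)) = real k * S - a * (real k * c)" .
    have "pmf_cov (subsample n k) F W = (real k * S - a * (real k * c)) / (real n * c)"
      unfolding pmf_cov_def EF EW using finT neT cov N
      by (simp add: sub integral_pmf_of_set)
    also have "... = (real k / real n) * (S / c - a)"
      using cpos npos by (simp add: field_simps)
    finally show ?thesis using EF EH by (simp add: W_def)
  qed
  have second: "(\<Sum>j=1..n. (pmf_cov (subsample n k) F (\<lambda>ts. if j \<in> set ts then 1 else 0))\<^sup>2)
         = (real k / real n)\<^sup>2 *
           (\<Sum>j=1..n. (measure_pmf.expectation (cond_pmf (subsample n k) {ts. hd ts = j}) F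
                        - measure_pmf.expectation (subsample n k) F)\<^sup>2)"
    unfolding sum_distrib_left
  proof (rule sum.cong[OF refl])
    fix j assume j: "j \<in> {1..n}"
    show "(pmf_cov (subsample n k) F (\<lambda>ts. if j \<in> set ts then 1 else 0))\<^sup>2 =
      (real k / real n)\<^sup>2 * (measure_pmf.expectation (cond_pmf (subsample n k) {ts. hd ts = j}) F
                        - measure_pmf.expectation (subsample n k) F)\<^sup>2"
      unfolding first[OF j] by (rule power_mult_distrib)
  qed
  have A: "\<forall>j\<in>{1..n}. pmf_cov (subsample n k) F (\<lambda>ts. if j \<in> set ts then 1 else 0)
            = (real k / real n) *
              (measure_pmf.expectation (cond_pmf (subsample n k) {ts. hd ts = j}) F
               - measure_pmf.expectation (subsample n k) F)"
    using first by (intro ballI)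
  show ?thesis
    apply (rule conjI)
     apply (fact A[unfolded F_def])
    apply (fact second[unfolded F_def])
    done
qed


end
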